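(* Let $\tfrac12\le\gamma$ and $a=\tfrac12$. Let $\overline{F}_0\ge0$ be a function of $(s,\rho)$, $s\in\mathbb{R}$, $\rho\ge0$, and for $t\ge0$, $r>0$ define $$\overline{\phi}(t,r)=\frac4r\int_{t+r}^\infty\int_{t-r}^{t+r}\rho\,\overline{F}_0(s,\rho)\,d\eta\,d\xi,\qquad s=\frac{\xi+\eta}2,\ \rho=\frac{\xi-\eta}2.$$ Suppose that for all $(\xi,\eta)$ with $|\eta|\le\xi$, $$\rho\,\overline{F}_0(s,\rho)\le\frac{1}{\langle\xi\rangle\langle\eta\rangle^{2+2\gamma}}\chi_{\xi^a<\eta<\xi/2}.$$ Then $\overline{\phi}(t,r)\lesssim\langle t+r\rangle^{-2}$.
   Context: $\langle x\rangle=(1+x^2)^{1/2}$, $\chi_A$ denotes the indicator function of the set $A$, and $\lesssim$ means bounded by a constant multiple independent of $t,r$. *)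

theory Defs
  imports "HOL-Analysis.Analysis"
begin

definition jbr :: "real \<Rightarrow> real" where
  "jbr x = sqrt (1 + x\<^sup>2)"

text \<open>phibar(t,r) = 4/r * int_{t+r}^inf int_{t-r}^{t+r} rho F0(s,rho) d eta d xi,
  with s = (xi+eta)/2, rho = (xi-eta)/2.  The integrand is nonnegative on the
  domain of integration, so we use the nonnegative (extended) Lebesgue integral.\<close>
definition phibar :: "(real \<Rightarrow> real \<Rightarrow> real) \<Rightarrow> real \<Rightarrow> real \<Rightarrow> ennreal" where
  "phibar F0 t r = ennreal (4 / r) *
     (\<integral>\<^sup>+ \<xi>\<in>{t+r..}. (\<integral>\<^sup>+ \<eta>\<in>{t-r..t+r}.
        ennreal (((\<xi> - \<eta>) / 2) * F0 ((\<xi> + \<eta>) / 2) ((\<xi> - \<eta>) / 2)) \<partial>lborel) \<partial>lborel)"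

end

theory Submission imports Defs "HOL-Real_Asymp.Real_Asymp" begin
lemma inner_int:
  fixes x :: real assumes "x > 0"
  shows "(\<integral>\<^sup>+y\<in>{sqrt x..}. ennreal (1/(x*y^3)) \<partial>lborel) = ennreal (1/(2*x^2))"
proof -
  have "(\<integral>\<^sup>+y\<in>{sqrt x..}. ennreal (1/(x*y^3)) \<partial>lborel) = ennreal (0 - (-1/(2*x*(sqrt x)^2)))"
  proof (rule nn_integral_FTC_atLeast)
    show "(\<lambda>y::real. 1/(x*y^3)) \<in> borel_measurable borel" by measurable
    fix y assume "sqrt x \<le> y"
    hence y: "y > 0" using assms by (meson less_le_trans real_sqrt_gt_zero)
    show "0 \<le> 1/(x*y^3)" using y assms by simp
    show "((\<lambda>y. -1/(2*x*y^2)) has_real_derivative 1/(x*y^3)) (at y)"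
      using y assms by (auto intro!: derivative_eq_intros simp: field_simps power2_eq_square power3_eq_cube)
  next
    show "((\<lambda>y. -1/(2*x*y^2)) \<longlongrightarrow> 0) at_top" using assms by real_asymp
  qed
  also have "\<dots> = ennreal (1/(2*x^2))" using assms by (simp add: power2_eq_square)
  finally show ?thesis .
qed

lemma outer_int:
  fixes T :: real assumes "T > 0"
  shows "(\<integral>\<^sup>+x\<in>{T..}. ennreal (1/(2*x^2)) \<partial>lborel) = ennreal (1/(2*T))"
proof -
  have "(\<integral>\<^sup>+x\<in>{T..}. ennreal (1/(2*x^2)) \<partial>lborel) = ennreal (0 - (-1/(2*T)))"
  proof (rule nn_integral_FTC_atLeast)
    show "(\<lambda>y::real. 1/(2*y^2)) \<in> borel_measurable borel" by measurable
    fix y assume "T \<le> y"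
    hence y: "y > 0" using assms by linarith
    show "0 \<le> 1/(2*y^2)" using y assms by simp
    show "((\<lambda>y. -1/(2*y)) has_real_derivative 1/(2*y^2)) (at y)"
      using y assms by (auto intro!: derivative_eq_intros simp: field_simps power2_eq_square)
  next
    show "((\<lambda>y. -1/(2*y)) \<longlongrightarrow> (0::real)) at_top" by real_asymp
  qed
  thus ?thesis by simp
qed
lemma jbr_ge: "jbr x \<ge> \<bar>x\<bar>" "jbr x \<ge> 1"
  unfolding jbr_def by (simp_all add: real_le_rsqrt)

lemma Bbound:
  fixes x y g :: real assumes "x > 0" "y > 0" "g \<ge> 1/2"
  shows "1/(jbr x * jbr y powr (2+2*g)) \<le> 1/(x*y^3)"
proof -
  have "y^3 = y powr 3" using assms by (simp add: powr_realpow)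
  also have "\<dots> \<le> jbr y powr 3" using assms jbr_ge[of y] by (intro powr_mono2) auto
  also have "\<dots> \<le> jbr y powr (2+2*g)" using assms jbr_ge[of y] by (intro powr_mono) auto
  finally have 1: "y^3 \<le> jbr y powr (2+2*g)" .
  have 2: "x \<le> jbr x" using jbr_ge[of x] by linarith
  have "x*y^3 \<le> jbr x * jbr y powr (2+2*g)" using 1 2 assms by (intro mult_mono) auto
  moreover have "0 < jbr x * jbr y powr (2+2*g)" using jbr_ge[of x] jbr_ge[of y] by (intro mult_pos_pos) auto
  moreover have "0 < x*y^3" using assms by simp
  ultimately show ?thesis by (intro divide_left_mono) auto
qed

lemma nn0: "(\<And>x. f x = 0) \<Longrightarrow> integral\<^sup>N M f = 0"
proof -
  assume "\<And>x. f x = 0"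
  hence "f = (\<lambda>_. 0)" by auto
  thus ?thesis by simp
qed

theorem lemmaA2:
  fixes \<gamma> :: real and F0 :: "real \<Rightarrow> real \<Rightarrow> real"
  assumes "1/2 \<le> \<gamma>"
    and "\<And>s \<rho>. \<rho> \<ge> 0 \<Longrightarrow> F0 s \<rho> \<ge> 0"
    and "\<And>\<xi> \<eta>. \<bar>\<eta>\<bar> \<le> \<xi> \<Longrightarrow>
          ((\<xi> - \<eta>) / 2) * F0 ((\<xi> + \<eta>) / 2) ((\<xi> - \<eta>) / 2)
          \<le> 1 / (jbr \<xi> * jbr \<eta> powr (2 + 2 * \<gamma>))
             * indicator {\<eta>'. \<xi> powr (1/2) < \<eta>' \<and> \<eta>' < \<xi> / 2} \<eta>"
  shows "\<exists>C. \<forall>t r. t \<ge> 0 \<longrightarrow> r > 0 \<longrightarrow>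
           phibar F0 t r \<le> ennreal (C * jbr (t + r) powr (-2))"
proof (intro exI allI impI)
  fix t r :: real assume t: "t \<ge> 0" and r: "r > 0"
  define T where "T = t + r"
  have T0: "T > 0" using t r T_def by linarith
  define G where "G = (\<lambda>\<xi> \<eta>. ennreal (((\<xi> - \<eta>) / 2) * F0 ((\<xi> + \<eta>) / 2) ((\<xi> - \<eta>) / 2)))"
  have ph: "phibar F0 t r = ennreal (4/r) * (\<integral>\<^sup>+ \<xi>\<in>{T..}. (\<integral>\<^sup>+ \<eta>\<in>{t-r..T}. G \<xi> \<eta> \<partial>lborel) \<partial>lborel)"
    unfolding phibar_def G_def T_def by simp
  have jp: "jbr T > 0" by (simp add: jbr_def add_pos_nonneg)
  have "jbr T powr (-2) = inverse (jbr T powr 2)" by (simp add: powr_minus)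
  also have "\<dots> = inverse (jbr T ^ 2)" using jp by (simp add: powr_realpow)
  also have "\<dots> = 1/(1+T^2)" unfolding jbr_def by (simp add: divide_inverse add_nonneg_nonneg)
  finally have jT: "jbr T powr (-2) = 1/(1+T^2)" .
  have pw: "G \<xi> \<eta> \<le> ennreal (1/(\<xi>*\<eta>^3)) \<and> sqrt \<xi> < \<eta>"
    if "G \<xi> \<eta> \<noteq> 0" "\<xi> \<ge> T" "t - r \<le> \<eta>" "\<eta> \<le> T" for \<xi> \<eta>
  proof -
    have "\<bar>\<eta>\<bar> \<le> \<xi>" using that t r T_def by auto
    note A = assms(3)[OF this]
    have ind: "\<xi> powr (1/2) < \<eta>"
    proof (rule ccontr)
      assume "\<not> ?thesis"
      hence "((\<xi> - \<eta>) / 2) * F0 ((\<xi> + \<eta>) / 2) ((\<xi> - \<eta>) / 2) \<le> 0" using A by simp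
      hence "G \<xi> \<eta> = 0" unfolding G_def by (simp add: ennreal_eq_0_iff)
      thus False using that by simp
    qed
    have sx: "sqrt \<xi> < \<eta>" using ind that T0 by (simp add: powr_half_sqrt)
    have x0: "\<xi> > 0" using that T0 by linarith
    have y0: "\<eta> > 0" using sx x0 by (meson less_trans real_sqrt_gt_zero)
    have "G \<xi> \<eta> \<le> ennreal (1 / (jbr \<xi> * jbr \<eta> powr (2 + 2 * \<gamma>)))"
    proof -
      have Bnn: "0 \<le> 1/(jbr \<xi> * jbr \<eta> powr (2+2*\<gamma>))" using jbr_ge[of \<xi>] by simp
      have "1 / (jbr \<xi> * jbr \<eta> powr (2 + 2 * \<gamma>))
             * indicator {\<eta>'. \<xi> powr (1/2) < \<eta>' \<and> \<eta>' < \<xi> / 2} \<eta> \<le> 1/(jbr \<xi> * jbr \<eta> powr (2+2*\<gamma>))"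
        by (rule mult_left_le[OF _ Bnn]) (simp add: indicator_def)
      thus ?thesis unfolding G_def using A by (intro ennreal_leI) linarith
    qed
    also have "\<dots> \<le> ennreal (1/(\<xi>*\<eta>^3))" using Bbound[OF x0 y0 assms(1)] by (intro ennreal_leI)
    finally show ?thesis using sx by simp
  qed
  show "phibar F0 t r \<le> ennreal (128 * jbr (t + r) powr (-2))"
  proof (cases "T < 1")
    case True
    have "G \<xi> \<eta> = 0" if "\<xi> \<ge> T" "t - r \<le> \<eta>" "\<eta> \<le> T" for \<xi> \<eta>
    proof (rule ccontr)
      assume "G \<xi> \<eta> \<noteq> 0"
      from pw[OF this that] have "sqrt \<xi> < \<eta>" by simp
      moreover have "T \<le> sqrt T"
      proof -
        have "T*T \<le> T*1" using True T0 by (intro mult_left_mono) auto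
        thus ?thesis by (intro real_le_rsqrt) (simp add: power2_eq_square)
      qed
      moreover have "sqrt T \<le> sqrt \<xi>" using that by simp
      ultimately show False using that by linarith
    qed
    note G0 = this
    have "(\<integral>\<^sup>+ \<xi>\<in>{T..}. (\<integral>\<^sup>+ \<eta>\<in>{t-r..T}. G \<xi> \<eta> \<partial>lborel) \<partial>lborel) = 0"
    proof (rule nn0)
      fix \<xi> :: real
      show "(\<integral>\<^sup>+ \<eta>\<in>{t-r..T}. G \<xi> \<eta> \<partial>lborel) * indicator {T..} \<xi> = 0"
      proof (cases "T \<le> \<xi>")
        case True
        have "(\<integral>\<^sup>+ \<eta>\<in>{t-r..T}. G \<xi> \<eta> \<partial>lborel) = 0"
          by (rule nn0) (auto simp: indicator_def G0[OF True])
        thus ?thesis by simp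
      qed (simp add: indicator_def)
    qed
    thus ?thesis unfolding ph by simp
  next
    case False
    hence T1: "T \<ge> 1" by simp
    have fin: "ennreal (4/r) * X \<le> ennreal (128 * jbr T powr (-2))"
      if "ennreal (4/r) * X \<le> ennreal (64/T^2)" for X
    proof -
      have h: "1 \<le> T^2" using T1 by (simp add: one_le_power)
      have "64/T^2 = 128/(2*T^2)" by simp
      also have "\<dots> \<le> 128/(1+T^2)" using h by (intro divide_left_mono mult_pos_pos) auto
      also have "\<dots> = 128 * (1/(1+T^2))" by simp
      finally have "64/T^2 \<le> 128 * (1/(1+T^2))" .
      hence "ennreal (64/T^2) \<le> ennreal (128 * jbr T powr (-2))" using jT by (intro ennreal_leI) simp
      thus ?thesis using that by (rule order_trans[rotated])
    qed
    show ?thesis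
    proof (cases "4*r \<le> T")
      case True
      have "(\<integral>\<^sup>+ \<xi>\<in>{T..}. (\<integral>\<^sup>+ \<eta>\<in>{t-r..T}. G \<xi> \<eta> \<partial>lborel) \<partial>lborel)
          \<le> (\<integral>\<^sup>+ \<xi>. ennreal (16*r/T^4) * indicator {T..T^2} \<xi> \<partial>lborel)"
      proof (intro nn_integral_mono)
        fix \<xi> :: real
        show "(\<integral>\<^sup>+ \<eta>\<in>{t-r..T}. G \<xi> \<eta> \<partial>lborel) * indicator {T..} \<xi> \<le> ennreal (16*r/T^4) * indicator {T..T^2} \<xi>"
        proof (cases "T \<le> \<xi> \<and> \<xi> \<le> T^2")
          case True
          have "(\<integral>\<^sup>+ \<eta>\<in>{t-r..T}. G \<xi> \<eta> \<partial>lborel) \<le> (\<integral>\<^sup>+ \<eta>\<in>{t-r..T}. ennreal (8/T^4) \<partial>lborel)"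
          proof (intro nn_integral_mono)
            fix \<eta> :: real
            show "G \<xi> \<eta> * indicator {t-r..T} \<eta> \<le> ennreal (8/T^4) * indicator {t-r..T} \<eta>"
            proof (cases "G \<xi> \<eta> \<noteq> 0 \<and> \<eta> \<in> {t-r..T}")
              case c: True
              hence p: "G \<xi> \<eta> \<le> ennreal (1/(\<xi>*\<eta>^3))" using pw True by auto
              have y: "T/2 \<le> \<eta>" using c \<open>4*r \<le> T\<close> T_def by auto
              have p3: "(T/2)^3 \<le> \<eta>^3" using y T0 by (intro power_mono) auto
              have m: "T*(T/2)^3 \<le> \<xi>*\<eta>^3" using p3 True T0 by (intro mult_mono) auto
              have pos: "0 < T*(T/2)^3" using T0 by simp
              have pos2: "0 < \<xi>*\<eta>^3" using m pos by linarith
              have "1/(\<xi>*\<eta>^3) \<le> 1/(T*(T/2)^3)" using divide_left_mono[OF m _ mult_pos_pos[OF pos2 pos], of 1] by simp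
              also have "\<dots> = 8/T^4" using T0 by (simp add: power3_eq_cube power4_eq_xxxx)
              finally show ?thesis using p c by (auto simp: indicator_def intro: order_trans ennreal_leI)
            qed (auto simp: indicator_def)
          qed
          also have "\<dots> = ennreal (8/T^4) * ennreal (2*r)" using r T_def by (simp add: nn_integral_cmult_indicator)
          also have "\<dots> = ennreal (16*r/T^4)" using r by (simp flip: ennreal_mult)
          finally show ?thesis using True by (simp add: indicator_def)
        next
          case nb: False
          show ?thesis
          proof (cases "T \<le> \<xi>")
            case True
            hence big: "\<xi> > T^2" using nb by simp
            have "(\<integral>\<^sup>+ \<eta>\<in>{t-r..T}. G \<xi> \<eta> \<partial>lborel) = 0"
            proof (intro nn0)
              fix \<eta> :: real
              show "G \<xi> \<eta> * indicator {t-r..T} \<eta> = 0"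
              proof (rule ccontr)
                assume "G \<xi> \<eta> * indicator {t - r..T} \<eta> \<noteq> 0"
                hence "G \<xi> \<eta> \<noteq> 0" "\<eta> \<in> {t-r..T}" by (auto simp: indicator_def split: if_splits)
                with pw True have "sqrt \<xi> < \<eta>" by auto
                moreover have "T < sqrt \<xi>" using big T0 by (simp add: real_less_rsqrt)
                ultimately show False using \<open>\<eta> \<in> _\<close> by auto
              qed
            qed
            thus ?thesis by simp
          qed (simp add: indicator_def)
        qed
      qed
      also have "\<dots> = ennreal (16*r/T^4) * ennreal (T^2 - T)"
        using T1 by (simp add: nn_integral_cmult_indicator power2_eq_square)
      also have "\<dots> = ennreal (16*r/T^4 * (T^2 - T))"
      proof -
        have "T*1 \<le> T*T" using T1 by (intro mult_left_mono) auto
        hence "0 \<le> T^2 - T" by (simp add: power2_eq_square)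
        thus ?thesis by (rule ennreal_mult''[symmetric])
      qed
      finally have I: "(\<integral>\<^sup>+ \<xi>\<in>{T..}. (\<integral>\<^sup>+ \<eta>\<in>{t-r..T}. G \<xi> \<eta> \<partial>lborel) \<partial>lborel) \<le> ennreal (16*r/T^4 * (T^2 - T))" .
      have "ennreal (4/r) * (\<integral>\<^sup>+ \<xi>\<in>{T..}. (\<integral>\<^sup>+ \<eta>\<in>{t-r..T}. G \<xi> \<eta> \<partial>lborel) \<partial>lborel)
          \<le> ennreal (4/r) * ennreal (16*r/T^4 * (T^2 - T))" using I by (rule mult_left_mono) simp
      also have "\<dots> = ennreal (4/r * (16*r/T^4 * (T^2 - T)))"
      proof -
        have "T*1 \<le> T*T" using T1 by (intro mult_left_mono) auto
        hence "0 \<le> T^2 - T" by (simp add: power2_eq_square)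
        hence "0 \<le> 16*r/T^4 * (T^2 - T)" using r by simp
        thus ?thesis by (rule ennreal_mult''[symmetric])
      qed
      also have "\<dots> \<le> ennreal (64/T^2)"
      proof (intro ennreal_leI)
        have "4/r * (16*r/T^4 * (T^2 - T)) = 64 * (T^2 - T) / T^4" using r T0 by (simp add: field_simps)
        also have "\<dots> \<le> 64 * T^2 / T^4" using T0 by (intro divide_right_mono) auto
        also have "\<dots> = 64/T^2" using T0 by (simp add: power2_eq_square power4_eq_xxxx)
        finally show "4/r * (16*r/T^4 * (T^2 - T)) \<le> 64/T^2" .
      qed
      finally show ?thesis unfolding ph T_def[symmetric] by (rule fin)
    next
      case False
      have "(\<integral>\<^sup>+ \<xi>\<in>{T..}. (\<integral>\<^sup>+ \<eta>\<in>{t-r..T}. G \<xi> \<eta> \<partial>lborel) \<partial>lborel)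
          \<le> (\<integral>\<^sup>+ \<xi>\<in>{T..}. ennreal (1/(2*\<xi>^2)) \<partial>lborel)"
      proof (intro nn_integral_mono)
        fix \<xi> :: real
        show "(\<integral>\<^sup>+ \<eta>\<in>{t-r..T}. G \<xi> \<eta> \<partial>lborel) * indicator {T..} \<xi> \<le> ennreal (1/(2*\<xi>^2)) * indicator {T..} \<xi>"
        proof (cases "T \<le> \<xi>")
          case True
          have "(\<integral>\<^sup>+ \<eta>\<in>{t-r..T}. G \<xi> \<eta> \<partial>lborel) \<le> (\<integral>\<^sup>+ \<eta>\<in>{sqrt \<xi>..}. ennreal (1/(\<xi>*\<eta>^3)) \<partial>lborel)"
          proof (intro nn_integral_mono)
            fix \<eta> :: real
            show "G \<xi> \<eta> * indicator {t-r..T} \<eta> \<le> ennreal (1/(\<xi>*\<eta>^3)) * indicator {sqrt \<xi>..} \<eta>"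
            proof (cases "G \<xi> \<eta> \<noteq> 0 \<and> \<eta> \<in> {t-r..T}")
              case c: True
              thus ?thesis using pw[of \<xi> \<eta>] True by (auto simp: indicator_def)
            qed (auto simp: indicator_def)
          qed
          also have "\<dots> = ennreal (1/(2*\<xi>^2))" using True T0 by (intro inner_int) auto
          finally show ?thesis using True by (simp add: indicator_def)
        qed (simp add: indicator_def)
      qed
      also have "\<dots> = ennreal (1/(2*T))" using T0 by (rule outer_int)
      finally have I: "(\<integral>\<^sup>+ \<xi>\<in>{T..}. (\<integral>\<^sup>+ \<eta>\<in>{t-r..T}. G \<xi> \<eta> \<partial>lborel) \<partial>lborel) \<le> ennreal (1/(2*T))" .
      have "ennreal (4/r) * (\<integral>\<^sup>+ \<xi>\<in>{T..}. (\<integral>\<^sup>+ \<eta>\<in>{t-r..T}. G \<xi> \<eta> \<partial>lborel) \<partial>lborel)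
          \<le> ennreal (4/r) * ennreal (1/(2*T))" using I by (rule mult_left_mono) simp
      also have "\<dots> = ennreal (4/r * (1/(2*T)))" using T0 r by (intro ennreal_mult[symmetric]) auto
      also have "\<dots> \<le> ennreal (64/T^2)"
      proof (intro ennreal_leI)
        have "4/r * (1/(2*T)) = 2/(r*T)" using r T0 by (simp add: field_simps)
        also have "\<dots> \<le> 2/((T/4)*T)" using False r T0 by (intro divide_left_mono mult_right_mono) auto
        also have "\<dots> \<le> 64/T^2" using T0 by (simp add: field_simps power2_eq_square)
        finally show "4/r * (1/(2*T)) \<le> 64/T^2" .
      qed
      finally show ?thesis unfolding ph T_def[symmetric] by (rule fin)
    qed
  qed
qed
end
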